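(* Let $0<q<1$ and let $a,b\in\mathbb{C}\setminus\{0\}$ be generic (such that all normalizing factors below are finite and nonzero, e.g. $a^2b^2\notin\{q^{-j}:j\in\mathbb{Z}_{\ge0}\}$). For the monic Askey-Wilson polynomials $P_n(z;a,b,c,d\,|\,q)$ one has, as Laurent polynomials in $z$, for all $n\ge0$: $$P_{2n}(z;a,b,-a,-b\,|\,q)=P_n(z^2;a^2,b^2,-1,-q\,|\,q^2),\qquad P_{2n+1}(z;a,b,-a,-b\,|\,q)=(z+z^{-1})\,P_n(z^2;a^2,b^2,-q,-q^2\,|\,q^2).$$
   Context: $(x;q)_k=\prod_{j=0}^{k-1}(1-xq^j)$, $(x_1,\dots,x_r;q)_k=\prod_i(x_i;q)_k$. The monic Askey-Wilson polynomial is $P_n(z;a,b,c,d\,|\,q)=\frac{(ab,ac,ad;q)_n}{a^n(abcdq^{n-1};q)_n}\sum_{k=0}^n\frac{(q^{-n},q^{n-1}abcd,az,az^{-1};q)_k}{(ab,ac,ad,q;q)_k}q^k$, a symmetric Laurent polynomial in $z$ (invariant under $z\mapsto z^{-1}$) of the form $z^n+z^{-n}+$ lower terms, symmetric in $a,b,c,d$ (extended by continuity where formulas degenerate). *)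

theory Defs
  imports Complex_Main
begin

definition qpoch :: "complex \<Rightarrow> complex \<Rightarrow> nat \<Rightarrow> complex" where
  "qpoch x q k = (\<Prod>j<k. 1 - x * q ^ j)"

text \<open>Monic Askey-Wilson polynomial P_n(z;a,b,c,d|q), given by the explicit formula
  (valid when the normalizing factors are finite and nonzero).\<close>
definition AW :: "nat \<Rightarrow> complex \<Rightarrow> complex \<Rightarrow> complex \<Rightarrow> complex \<Rightarrow> complex \<Rightarrow> complex \<Rightarrow> complex" where
  "AW n z a b c d q =
     qpoch (a*b) q n * qpoch (a*c) q n * qpoch (a*d) q n
       / (a ^ n * qpoch (a*b*c*d * q powi (int n - 1)) q n)
     * (\<Sum>k\<le>n. qpoch (q powi (- int n)) q k * qpoch (a*b*c*d * q powi (int n - 1)) q k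
                 * qpoch (a*z) q k * qpoch (a/z) q k
                 / (qpoch (a*b) q k * qpoch (a*c) q k * qpoch (a*d) q k * qpoch q q k)
                 * q ^ k)"

end

theory Submission
  imports Defs "HOL-Computational_Algebra.Polynomial"
begin


lemma core_poly:
  fixes z y a b c d q t :: complex
  assumes "z*y = 1"
  shows "t*((1-b*z)*(1-c*z)*(1-d*z) * ((1-a*t*z)*(1-a*q*t*z)*(q-a*y) - q*(1-a*z)*((1-a*t*z)*(1-a*t*y))) * ((1-y^2)*(1-q*y^2))
   + (1-b*y)*(1-c*y)*(1-d*y) * ((1-a*t*y)*(1-a*q*t*y)*(q-a*z) - q*(1-a*y)*((1-a*t*z)*(1-a*t*y))) * ((1-z^2)*(1-q*z^2)))
   = ((1-q*t)*(1-a*b*c*d*t) * ((1-a*t*z)*(1-a*t*y))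
     - (1-q*t)*(1-a*b*t)*(1-a*c*t)*(1-a*d*t)) * ((1-z^2)*(1-q*z^2)) * ((1-y^2)*(1-q*y^2))"
  using assms by algebra

lemma core_abs:
  fixes N1 N2 P1 P2 D1 D2 R q t :: complex
  assumes "t*(N1*P1*D2 + N2*P2*D1) = R*D1*D2" "D1 \<noteq> 0" "D2 \<noteq> 0" "q \<noteq> 0" "t \<noteq> 0"
  shows "N1/D1*(P1/q) + N2/D2*(P2/q) = R/(q*t)"
  using assms by (simp add: field_simps)

lemma core:
  fixes z y a b c d q t :: complex
  assumes zy: "z*y = 1" and D1: "(1-z^2)*(1-q*z^2) \<noteq> 0" and D2: "(1-y^2)*(1-q*y^2) \<noteq> 0"
    and q: "q \<noteq> 0" and t: "t \<noteq> 0"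
  shows "(1-b*z)*(1-c*z)*(1-d*z)/((1-z^2)*(1-q*z^2)) *
     ((1-a*t*z)*(1-a*q*t*z)*(1-a*y/q) - (1-a*z)*((1-a*t*z)*(1-a*t*y)))
   + (1-b*y)*(1-c*y)*(1-d*y)/((1-y^2)*(1-q*y^2)) *
     ((1-a*t*y)*(1-a*q*t*y)*(1-a*z/q) - (1-a*y)*((1-a*t*z)*(1-a*t*y)))
   = (1-q*t)*(1-a*b*c*d*t)/(q*t) * ((1-a*t*z)*(1-a*t*y))
     - (1-q*t)*(1-a*b*t)*(1-a*c*t)*(1-a*d*t)/(q*t)"
proof -
  have e1: "(1-a*t*z)*(1-a*q*t*z)*(1-a*y/q) - (1-a*z)*((1-a*t*z)*(1-a*t*y))
     = ((1-a*t*z)*(1-a*q*t*z)*(q-a*y) - q*(1-a*z)*((1-a*t*z)*(1-a*t*y)))/q"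
    using q by (simp add: field_simps)
  have e2: "(1-a*t*y)*(1-a*q*t*y)*(1-a*z/q) - (1-a*y)*((1-a*t*z)*(1-a*t*y))
     = ((1-a*t*y)*(1-a*q*t*y)*(q-a*z) - q*(1-a*y)*((1-a*t*z)*(1-a*t*y)))/q"
    using q by (simp add: field_simps)
  have e3: "(1-q*t)*(1-a*b*c*d*t)/(q*t) * ((1-a*t*z)*(1-a*t*y))
     - (1-q*t)*(1-a*b*t)*(1-a*c*t)*(1-a*d*t)/(q*t)
     = ((1-q*t)*(1-a*b*c*d*t) * ((1-a*t*z)*(1-a*t*y))
     - (1-q*t)*(1-a*b*t)*(1-a*c*t)*(1-a*d*t))/(q*t)"
    by (simp add: diff_divide_distrib)
  show ?thesis unfolding e1 e2 e3
    by (rule core_abs[OF core_poly[OF zy] D1 D2 q t])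
qed

definition phi :: "complex \<Rightarrow> complex \<Rightarrow> nat \<Rightarrow> complex \<Rightarrow> complex" where
  "phi a q k z = qpoch (a*z) q k * qpoch (a/z) q k"
definition Awt :: "complex \<Rightarrow> complex \<Rightarrow> complex \<Rightarrow> complex \<Rightarrow> complex \<Rightarrow> complex \<Rightarrow> complex" where
  "Awt a b c d q z = (1-a*z)*(1-b*z)*(1-c*z)*(1-d*z)/((1-z^2)*(1-q*z^2))"
definition Lop :: "(complex \<Rightarrow> complex) \<Rightarrow> complex \<Rightarrow> (complex \<Rightarrow> complex) \<Rightarrow> complex \<Rightarrow> complex" where
  "Lop A q f z = A z * (f (q*z) - f z) + A (1/z) * (f (z/q) - f z)"
definition lam :: "complex \<Rightarrow> complex \<Rightarrow> complex \<Rightarrow> complex \<Rightarrow> complex \<Rightarrow> nat \<Rightarrow> complex" where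
  "lam a b c d q m = (1-q^m)*(1-a*b*c*d*q^m/q)/q^m"
definition mu :: "complex \<Rightarrow> complex \<Rightarrow> complex \<Rightarrow> complex \<Rightarrow> complex \<Rightarrow> nat \<Rightarrow> complex" where
  "mu a b c d q m = -((1-q^m)*(1-a*b*q^m/q)*(1-a*c*q^m/q)*(1-a*d*q^m/q)/q^m)"
definition good :: "complex \<Rightarrow> complex \<Rightarrow> bool" where
  "good q z \<longleftrightarrow> z \<noteq> 0 \<and> 1 - z^2 \<noteq> 0 \<and> 1 - q*z^2 \<noteq> 0 \<and> z^2 \<noteq> q"

lemma qpoch_0[simp]: "qpoch x q 0 = 1" by (simp add: qpoch_def)
lemma qpoch_Suc: "qpoch x q (Suc k) = qpoch x q k * (1 - x*q^k)"
  by (simp add: qpoch_def)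
lemma qpoch_Suc': "qpoch x q (Suc k) = (1 - x) * qpoch (x*q) q k"
  unfolding qpoch_def by (subst prod.lessThan_Suc_shift) (simp add: mult.assoc)

lemma G1:
  assumes g: "good q z" and q: "q \<noteq> 0"
  shows "Lop (Awt a b c d q) q (phi a q k) z = lam a b c d q k * phi a q k z + mu a b c d q k * phi a q (k-1) z"
proof (cases k)
  case 0
  then show ?thesis by (simp add: Lop_def phi_def lam_def mu_def)
next
  case (Suc j)
  define t where "t = q^j"
  define y where "y = 1/z"
  have z: "z \<noteq> 0" using g by (simp add: good_def)
  have t: "t \<noteq> 0" using q by (simp add: t_def)
  have zy: "z*y = 1" using z by (simp add: y_def)
  define U where "U = qpoch (a*z) q j"
  define V where "V = qpoch (a*y) q j"
  have h1: "phi a q (Suc j) z = U*V*((1-a*t*z)*(1-a*t*y))"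
    by (simp add: phi_def qpoch_Suc U_def V_def y_def t_def)
  have h4: "phi a q j z = U*V" by (simp add: phi_def U_def V_def y_def)
  have h2: "(1-a*z)*phi a q (Suc j) (q*z) = U*V*((1-a*t*z)*(1-a*q*t*z)*(1-a*y/q))"
  proof -
    have s1: "(1-a*z)*qpoch (a*(q*z)) q j = U*(1-a*t*z)"
      using qpoch_Suc[of "a*z" q j] qpoch_Suc'[of "a*z" q j]
      by (simp add: U_def t_def mult_ac)
    have s2: "qpoch (a/(q*z)) q (Suc j) = (1-a*y/q)*V"
      using qpoch_Suc'[of "a/(q*z)" q j] q z by (simp add: V_def y_def)
    have s3: "qpoch (a*(q*z)) q (Suc j) = qpoch (a*(q*z)) q j * (1-a*q*t*z)"
      by (simp add: qpoch_Suc t_def mult_ac)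
    have "(1-a*z)*phi a q (Suc j) (q*z) = ((1-a*z)*qpoch (a*(q*z)) q j) * (1-a*q*t*z) * ((1-a*y/q)*V)"
      unfolding phi_def s2 s3 by (simp add: mult_ac)
    also have "\<dots> = U*V*((1-a*t*z)*(1-a*q*t*z)*(1-a*y/q))" unfolding s1 by (simp add: mult_ac)
    finally show ?thesis .
  qed
  have h3: "(1-a*y)*phi a q (Suc j) (z/q) = U*V*((1-a*t*y)*(1-a*q*t*y)*(1-a*z/q))"
  proof -
    have e: "a/(z/q) = a*y*q" using q z by (simp add: y_def)
    have s1: "(1-a*y)*qpoch (a*y*q) q j = V*(1-a*t*y)"
      using qpoch_Suc[of "a*y" q j] qpoch_Suc'[of "a*y" q j]
      by (simp add: V_def t_def mult_ac)
    have s2: "qpoch (a*(z/q)) q (Suc j) = (1-a*z/q)*U"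
      using qpoch_Suc'[of "a*(z/q)" q j] q z by (simp add: U_def)
    have s3: "qpoch (a*y*q) q (Suc j) = qpoch (a*y*q) q j * (1-a*q*t*y)"
      by (simp add: qpoch_Suc t_def mult_ac)
    have "(1-a*y)*phi a q (Suc j) (z/q) = ((1-a*y)*qpoch (a*y*q) q j) * (1-a*q*t*y) * ((1-a*z/q)*U)"
      unfolding phi_def e s2 s3 by (simp add: mult_ac)
    also have "\<dots> = U*V*((1-a*t*y)*(1-a*q*t*y)*(1-a*z/q))" unfolding s1 by (simp add: mult_ac)
    finally show ?thesis .
  qed
  have D1: "(1-z^2)*(1-q*z^2) \<noteq> 0" using g by (simp add: good_def)
  have D2: "(1-y^2)*(1-q*y^2) \<noteq> 0"
  proof -
    have "1 - y^2 = (z^2-1)/z^2" "1 - q*y^2 = (z^2-q)/z^2" using z by (simp_all add: y_def field_simps)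
    moreover have "z^2 - 1 \<noteq> 0" "z^2 - q \<noteq> 0" using g by (auto simp: good_def)
    ultimately show ?thesis using z by simp
  qed
  define Y1 where "Y1 = (1-b*z)*(1-c*z)*(1-d*z)/((1-z^2)*(1-q*z^2))"
  define Y2 where "Y2 = (1-b*y)*(1-c*y)*(1-d*y)/((1-y^2)*(1-q*y^2))"
  have A1: "Awt a b c d q z = (1-a*z) * Y1"
    by (simp add: Awt_def Y1_def)
  have A2: "Awt a b c d q (1/z) = (1-a*y) * Y2"
    by (simp add: Awt_def y_def Y2_def)
  have "Lop (Awt a b c d q) q (phi a q (Suc j)) z
     = Y1 * ((1-a*z)*phi a q (Suc j) (q*z) - (1-a*z)*phi a q (Suc j) z)
     + Y2 * ((1-a*y)*phi a q (Suc j) (z/q) - (1-a*y)*phi a q (Suc j) z)"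
    unfolding Lop_def A1 A2 by (simp add: algebra_simps)
  also have "\<dots> = U*V*(Y1 *
     ((1-a*t*z)*(1-a*q*t*z)*(1-a*y/q) - (1-a*z)*((1-a*t*z)*(1-a*t*y)))
   + Y2 *
     ((1-a*t*y)*(1-a*q*t*y)*(1-a*z/q) - (1-a*y)*((1-a*t*z)*(1-a*t*y))))"
    unfolding h2 h3 h1 by (simp add: algebra_simps)
  also have "\<dots> = U*V*((1-q*t)*(1-a*b*c*d*t)/(q*t) * ((1-a*t*z)*(1-a*t*y))
     - (1-q*t)*(1-a*b*t)*(1-a*c*t)*(1-a*d*t)/(q*t))"
    unfolding Y1_def Y2_def by (subst core[OF zy D1 D2 q t]) rule
  also have "\<dots> = lam a b c d q k * phi a q k z + mu a b c d q k * phi a q (k-1) z"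
    unfolding Suc h1 h4 diff_Suc_1 lam_def mu_def using q by (simp add: t_def field_simps)
  finally show ?thesis unfolding Suc .
qed

definition pref :: "complex \<Rightarrow> complex \<Rightarrow> complex \<Rightarrow> complex \<Rightarrow> complex \<Rightarrow> nat \<Rightarrow> complex" where
  "pref a b c d q n = qpoch (a*b) q n * qpoch (a*c) q n * qpoch (a*d) q n
       / (a ^ n * qpoch (a*b*c*d * q powi (int n - 1)) q n)"
definition cf :: "complex \<Rightarrow> complex \<Rightarrow> complex \<Rightarrow> complex \<Rightarrow> complex \<Rightarrow> nat \<Rightarrow> nat \<Rightarrow> complex" where
  "cf a b c d q n k = qpoch (q powi (- int n)) q k * qpoch (a*b*c*d * q powi (int n - 1)) q k
                 / (qpoch (a*b) q k * qpoch (a*c) q k * qpoch (a*d) q k * qpoch q q k) * q ^ k"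

lemma AW_eq: "AW n z a b c d q = pref a b c d q n * (\<Sum>k\<le>n. cf a b c d q n k * phi a q k z)"
proof -
  have "\<And>k. qpoch (q powi (- int n)) q k * qpoch (a*b*c*d * q powi (int n - 1)) q k
                 * qpoch (a*z) q k * qpoch (a/z) q k
                 / (qpoch (a*b) q k * qpoch (a*c) q k * qpoch (a*d) q k * qpoch q q k)
                 * q ^ k = cf a b c d q n k * phi a q k z"
    unfolding cf_def phi_def by (simp add: divide_inverse mult_ac)
  then show ?thesis unfolding AW_def pref_def by simp
qed

lemma Lop_lin: "Lop A q (\<lambda>z. p * (\<Sum>k\<in>K. c k * g k z)) z = p * (\<Sum>k\<in>K. c k * Lop A q (g k) z)"
  unfolding Lop_def
  by (simp add: sum_distrib_left sum_subtractf[symmetric] sum.distrib[symmetric] algebra_simps)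

lemma powi1: "(q::complex) \<noteq> 0 \<Longrightarrow> q powi (- int n) = 1/q^n"
  by (subst power_int_minus) (simp add: inverse_eq_divide)
lemma powi2: "(q::complex) \<noteq> 0 \<Longrightarrow> q powi (int n - 1) = q^n/q"
  by (simp add: power_int_diff)

lemma cf_step:
  assumes q: "q \<noteq> 0" and nz: "1 - a*b*q^k \<noteq> 0" "1 - a*c*q^k \<noteq> 0" "1 - a*d*q^k \<noteq> 0" "1 - q*q^k \<noteq> 0"
  shows "cf a b c d q n (Suc k) * mu a b c d q (Suc k) = cf a b c d q n k * (lam a b c d q n - lam a b c d q k)"
proof (cases "qpoch (a*b) q k * qpoch (a*c) q k * qpoch (a*d) q k * qpoch q q k = 0")
  case True
  then have "qpoch (a*b) q k = 0 \<or> qpoch (a*c) q k = 0 \<or> qpoch (a*d) q k = 0 \<or> qpoch q q k = 0" by simp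
  then show ?thesis unfolding cf_def by (elim disjE) (simp_all add: qpoch_Suc)
next
  case False
  define N1 where "N1 = qpoch (q powi (- int n)) q k"
  define N2 where "N2 = qpoch (a*b*c*d * q powi (int n - 1)) q k"
  define D where "D = qpoch (a*b) q k * qpoch (a*c) q k * qpoch (a*d) q k * qpoch q q k"
  define Q where "Q = q^k"
  define Qn where "Qn = q^n"
  define S where "S = a*b*c*d"
  have Q: "Q \<noteq> 0" "Qn \<noteq> 0" using q by (auto simp: Q_def Qn_def)
  have D: "D \<noteq> 0" using False by (simp add: D_def)
  have c1: "cf a b c d q n k = N1*N2/D*Q" by (simp add: cf_def N1_def N2_def D_def Q_def)
  have c2: "cf a b c d q n (Suc k) = N1*(1-Q/Qn)*(N2*(1-S*Qn/q*Q))/(D*((1-a*b*Q)*(1-a*c*Q)*(1-a*d*Q)*(1-q*Q)))*(q*Q)"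
    unfolding cf_def qpoch_Suc N1_def N2_def D_def Q_def Qn_def S_def powi1[OF q] powi2[OF q]
    by (simp add: divide_inverse mult_ac)
  have m: "mu a b c d q (Suc k) = -((1-q*Q)*(1-a*b*Q)*(1-a*c*Q)*(1-a*d*Q)/Q)/q"
    using q by (simp add: mu_def Q_def mult_ac)
  have l: "lam a b c d q n - lam a b c d q k = (1-Qn)*(1-S*Qn/q)/Qn - (1-Q)*(1-S*Q/q)/Q"
    by (simp add: lam_def Q_def Qn_def S_def)
  define W where "W = (1-a*b*Q)*(1-a*c*Q)*(1-a*d*Q)*(1-q*Q)"
  have u: "W \<noteq> 0" using nz by (simp add: Q_def W_def)
  have m': "mu a b c d q (Suc k) = -(W/Q)/q" unfolding m W_def by (simp add: mult_ac)
  have "cf a b c d q n (Suc k) * mu a b c d q (Suc k) = -(N1*N2/D * ((1-Q/Qn)*(1-S*Qn*Q/q)))"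
    unfolding c2 m' W_def[symmetric] using u D q Q by (simp add: field_simps)
  also have "\<dots> = N1*N2/D*Q*((1-Qn)*(1-S*Qn/q)/Qn - (1-Q)*(1-S*Q/q)/Q)"
    using q Q D by (simp add: field_simps)
  finally show ?thesis unfolding c1 l .
qed

lemma mu0: "mu a b c d q 0 = 0" by (simp add: mu_def)

lemma G2:
  assumes g: "good q z" and q: "q \<noteq> 0"
    and nz: "\<And>k. k < n \<Longrightarrow> 1 - a*b*q^k \<noteq> 0 \<and> 1 - a*c*q^k \<noteq> 0 \<and> 1 - a*d*q^k \<noteq> 0 \<and> 1 - q*q^k \<noteq> 0"
  shows "Lop (Awt a b c d q) q (\<lambda>z. AW n z a b c d q) z = lam a b c d q n * AW n z a b c d q"
proof -
  let ?c = "cf a b c d q n" and ?l = "lam a b c d q" and ?m = "mu a b c d q" and ?p = "phi a q"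
  have f: "(\<lambda>z. AW n z a b c d q) = (\<lambda>z. pref a b c d q n * (\<Sum>k\<le>n. ?c k * ?p k z))"
    by (rule ext) (rule AW_eq)
  have "Lop (Awt a b c d q) q (\<lambda>z. AW n z a b c d q) z
      = pref a b c d q n * (\<Sum>k\<le>n. ?c k * (?l k * ?p k z + ?m k * ?p (k-1) z))"
    unfolding f Lop_lin G1[OF g q] ..
  also have "(\<Sum>k\<le>n. ?c k * (?l k * ?p k z + ?m k * ?p (k-1) z))
     = (\<Sum>k\<le>n. ?c k * ?l k * ?p k z) + (\<Sum>k\<le>n. ?c k * ?m k * ?p (k-1) z)"
    by (simp add: sum.distrib algebra_simps)
  also have "(\<Sum>k\<le>n. ?c k * ?m k * ?p (k-1) z) = (\<Sum>k<n. ?c (Suc k) * ?m (Suc k) * ?p k z)"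
    unfolding lessThan_Suc_atMost[symmetric] sum.lessThan_Suc_shift by (simp add: mu0)
  also have "\<dots> = (\<Sum>k<n. ?c k * (?l n - ?l k) * ?p k z)"
  proof (rule sum.cong[OF refl])
    fix k assume "k \<in> {..<n}"
    then have "k < n" by simp
    from nz[OF this] show "?c (Suc k) * ?m (Suc k) * ?p k z = ?c k * (?l n - ?l k) * ?p k z"
      using cf_step[OF q] by simp
  qed
  also have "(\<Sum>k\<le>n. ?c k * ?l k * ?p k z) + (\<Sum>k<n. ?c k * (?l n - ?l k) * ?p k z)
      = ?l n * (\<Sum>k\<le>n. ?c k * ?p k z)"
    unfolding lessThan_Suc_atMost[symmetric] sum.lessThan_Suc
    by (simp add: sum_distrib_left sum.distrib[symmetric] algebra_simps)
  finally show ?thesis unfolding AW_eq by (simp add: algebra_simps)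
qed

definition Phi :: "complex \<Rightarrow> complex \<Rightarrow> nat \<Rightarrow> complex poly" where
  "Phi a q k = (\<Prod>j<k. [:1 + a^2*q^(2*j), -(a*q^j):])"

lemma poly_Phi: assumes "z \<noteq> 0" shows "poly (Phi a q k) (z + 1/z) = phi a q k z"
proof -
  have "\<And>j. poly [:1 + a^2*q^(2*j), -(a*q^j):] (z + 1/z) = (1 - a*z*q^j) * (1 - a/z*q^j)"
    using assms by (simp add: field_simps power_mult power2_eq_square)
  then show ?thesis unfolding Phi_def phi_def qpoch_def poly_prod prod.distrib[symmetric] by simp
qed

lemma Phi_nz: "(a::complex) \<noteq> 0 \<Longrightarrow> q \<noteq> 0 \<Longrightarrow> [:1 + a^2*q^(2*j), -(a*q^j):] \<noteq> 0"
proof -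
  assume "a \<noteq> 0" "q \<noteq> 0"
  then have "a*q^j \<noteq> 0" by simp
  then show ?thesis by simp
qed

lemma degree_Phi: assumes "a \<noteq> 0" "q \<noteq> 0" shows "degree (Phi a q k) = k"
  unfolding Phi_def using assms by (subst degree_prod_eq_sum_degree) auto

lemma lead_Phi: assumes "a \<noteq> 0" "q \<noteq> 0" shows "lead_coeff (Phi a q k) = (\<Prod>j<k. -(a*q^j))"
  unfolding Phi_def lead_coeff_prod by (rule prod.cong) (use assms in auto)

lemma lead_Phi_nz: "a \<noteq> 0 \<Longrightarrow> q \<noteq> 0 \<Longrightarrow> lead_coeff (Phi a q k) \<noteq> 0"
  by (subst lead_Phi) auto

definition Paw :: "nat \<Rightarrow> complex \<Rightarrow> complex \<Rightarrow> complex \<Rightarrow> complex \<Rightarrow> complex \<Rightarrow> complex poly" where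
  "Paw n a b c d q = smult (pref a b c d q n) (\<Sum>k\<le>n. smult (cf a b c d q n k) (Phi a q k))"

lemma poly_Paw: "z \<noteq> 0 \<Longrightarrow> poly (Paw n a b c d q) (z + 1/z) = AW n z a b c d q"
  unfolding Paw_def AW_eq by (simp add: poly_sum poly_Phi)

lemma degree_Paw: assumes "a \<noteq> 0" "q \<noteq> 0" shows "degree (Paw n a b c d q) \<le> n"
  unfolding Paw_def
  by (rule order.trans[OF degree_smult_le], rule degree_sum_le)
     (auto intro: order.trans[OF degree_smult_le] simp: degree_Phi[OF assms])

lemma coeff_Paw: assumes "a \<noteq> 0" "q \<noteq> 0"
  shows "coeff (Paw n a b c d q) n = pref a b c d q n * cf a b c d q n n * lead_coeff (Phi a q n)"
proof -
  have "coeff (\<Sum>k\<le>n. smult (cf a b c d q n k) (Phi a q k)) n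
      = (\<Sum>k\<le>n. cf a b c d q n k * coeff (Phi a q k) n)"
    by (simp add: coeff_sum)
  also have "\<dots> = cf a b c d q n n * coeff (Phi a q n) n"
    unfolding lessThan_Suc_atMost[symmetric] sum.lessThan_Suc
    by (simp add: coeff_eq_0 degree_Phi[OF assms])
  finally show ?thesis unfolding Paw_def by (simp add: degree_Phi[OF assms])
qed

lemma T_lemma: assumes q: "(q::complex) \<noteq> 0"
  shows "qpoch (1/q^n) q n * q^n * (\<Prod>j<n. -(q^j)) = qpoch q q n"
proof (induction n)
  case 0 then show ?case by simp
next
  case (Suc n)
  have e: "1/q^(Suc n) * q = 1/q^n" using q by simp
  have "qpoch (1/q^(Suc n)) q (Suc n) * q^(Suc n) * (\<Prod>j<Suc n. -(q^j))
     = (qpoch (1/q^n) q n * q^n * (\<Prod>j<n. -(q^j))) * ((1 - 1/q^(Suc n)) * q * (-(q^n)))"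
    unfolding qpoch_Suc'[of "1/q^(Suc n)"] e by (simp add: mult_ac)
  also have "\<dots> = qpoch q q n * (1 - q * q^n)" unfolding Suc using q
    by (simp add: field_simps)
  finally show ?case by (simp add: qpoch_Suc)
qed

lemma monic_Paw:
  assumes a: "a \<noteq> 0" and q: "q \<noteq> 0"
    and nz1: "qpoch (a*b) q n \<noteq> 0" "qpoch (a*c) q n \<noteq> 0" "qpoch (a*d) q n \<noteq> 0" "qpoch q q n \<noteq> 0"
    and nz2: "qpoch (a*b*c*d * q powi (int n - 1)) q n \<noteq> 0"
  shows "coeff (Paw n a b c d q) n = 1"
proof -
  have l: "lead_coeff (Phi a q n) = a^n * (\<Prod>j<n. -(q^j))"
  proof -
    have "(\<Prod>j<n. -(a*q^j)) = (\<Prod>j<n. a * (-(q^j)))" by simp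
    also have "\<dots> = a^n * (\<Prod>j<n. -(q^j))" by (subst prod.distrib) simp
    finally show ?thesis unfolding lead_Phi[OF a q] .
  qed
  have T: "qpoch (1/q^n) q n * q^n * (\<Prod>j<n. -(q^j)) = qpoch q q n" by (rule T_lemma[OF q])
  show ?thesis unfolding coeff_Paw[OF a q] l pref_def cf_def powi1[OF q]
    using nz1 nz2 a q T by (simp add: field_simps)
qed

lemma Lop_cong: assumes "z \<noteq> 0" "q \<noteq> 0" "\<And>w. w \<noteq> 0 \<Longrightarrow> f w = g w"
  shows "Lop A q f z = Lop A q g z"
  unfolding Lop_def using assms by simp

lemma Lop_diff: "Lop A q (\<lambda>z. f z - g z) z = Lop A q f z - Lop A q g z"
  unfolding Lop_def by (simp add: algebra_simps)

lemma expand: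
  assumes a: "a \<noteq> 0" and q: "q \<noteq> 0"
  shows "degree F \<le> m \<Longrightarrow> \<exists>c. (\<forall>k>m. c k = 0) \<and> F = (\<Sum>k\<le>m. smult (c k) (Phi a q k))"
proof (induction m arbitrary: F)
  case 0
  then have "F = [:coeff F 0:]" using degree_0_id[of F] by simp
  then show ?case
    by (intro exI[of _ "\<lambda>k. if k = 0 then coeff F 0 else 0"]) (simp add: Phi_def)
next
  case (Suc m)
  define e where "e = coeff F (Suc m) / lead_coeff (Phi a q (Suc m))"
  define F' where "F' = F - smult e (Phi a q (Suc m))"
  have ln: "lead_coeff (Phi a q (Suc m)) \<noteq> 0" by (rule lead_Phi_nz[OF a q])
  have dF': "degree F' \<le> Suc m" unfolding F'_def
    using Suc.prems degree_Phi[OF a q, of "Suc m"] by (intro degree_diff_le) (auto intro: order.trans[OF degree_smult_le])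
  have "coeff F' (Suc m) = 0" unfolding F'_def e_def using ln degree_Phi[OF a q, of "Suc m"] by simp
  then have "degree F' \<le> m" using dF'
    by (intro degree_le) (metis Suc_lessI coeff_eq_0 le_less_trans not_le)
  from Suc.IH[OF this] obtain c where c: "\<forall>k>m. c k = 0" "F' = (\<Sum>k\<le>m. smult (c k) (Phi a q k))" by blast
  define c' where "c' = c(Suc m := e)"
  have "(\<Sum>k\<le>Suc m. smult (c' k) (Phi a q k)) = (\<Sum>k\<le>m. smult (c k) (Phi a q k)) + smult e (Phi a q (Suc m))"
    unfolding c'_def by (simp add: sum.atMost_Suc)
  also have "\<dots> = F" using c(2) unfolding F'_def by (metis diff_add_cancel)
  finally show ?case using c(1) by (intro exI[of _ c']) (auto simp: c'_def)
qed

lemma indep: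
  assumes a: "a \<noteq> 0" and q: "q \<noteq> 0"
  shows "(\<Sum>k\<le>m. smult (d k) (Phi a q k)) = 0 \<Longrightarrow> k \<le> m \<Longrightarrow> d k = 0"
proof (induction m arbitrary: k)
  case 0
  then show ?case by (simp add: Phi_def)
next
  case (Suc m)
  have dl: "degree (\<Sum>k\<le>m. smult (d k) (Phi a q k)) \<le> m"
    by (rule degree_sum_le) (auto intro: order.trans[OF degree_smult_le] simp: degree_Phi[OF a q])
  have "coeff (\<Sum>k\<le>Suc m. smult (d k) (Phi a q k)) (Suc m) = d (Suc m) * lead_coeff (Phi a q (Suc m))"
  proof -
    have "coeff (\<Sum>k\<le>m. smult (d k) (Phi a q k)) (Suc m) = 0" using dl by (intro coeff_eq_0) simp
    then show ?thesis by (simp add: sum.atMost_Suc degree_Phi[OF a q] del: coeff_sum)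
  qed
  moreover have "coeff (\<Sum>k\<le>Suc m. smult (d k) (Phi a q k)) (Suc m) = 0" using Suc.prems(1) by (simp only: coeff_0)
  ultimately have dS: "d (Suc m) = 0" using lead_Phi_nz[OF a q, of "Suc m"] by simp
  then have "(\<Sum>k\<le>m. smult (d k) (Phi a q k)) = 0" using Suc.prems(1) by (simp add: sum.atMost_Suc)
  then show ?case using Suc.IH dS Suc.prems(2) by (cases "k = Suc m") auto
qed

lemma Lop_basis:
  assumes g: "good q z" and q: "q \<noteq> 0" and c: "\<forall>k>M. c k = 0"
  shows "Lop (Awt a b c0 d q) q (\<lambda>z. poly (\<Sum>k\<le>M. smult (c k) (Phi a q k)) (z + 1/z)) z
    = (\<Sum>k\<le>M. (c k * lam a b c0 d q k + c (Suc k) * mu a b c0 d q (Suc k)) * phi a q k z)"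
proof -
  let ?l = "lam a b c0 d q" and ?m = "mu a b c0 d q" and ?p = "phi a q"
  have z: "z \<noteq> 0" using g by (simp add: good_def)
  have "Lop (Awt a b c0 d q) q (\<lambda>z. poly (\<Sum>k\<le>M. smult (c k) (Phi a q k)) (z + 1/z)) z
      = Lop (Awt a b c0 d q) q (\<lambda>z. 1 * (\<Sum>k\<le>M. c k * ?p k z)) z"
    by (rule Lop_cong[OF z q]) (simp add: poly_sum poly_Phi)
  also have "\<dots> = (\<Sum>k\<le>M. c k * (?l k * ?p k z + ?m k * ?p (k-1) z))"
    unfolding Lop_lin G1[OF g q] by simp
  also have "\<dots> = (\<Sum>k\<le>M. c k * ?l k * ?p k z) + (\<Sum>k\<le>M. c k * ?m k * ?p (k-1) z)"
    by (simp add: sum.distrib algebra_simps)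
  also have "(\<Sum>k\<le>M. c k * ?m k * ?p (k-1) z) = (\<Sum>k<M. c (Suc k) * ?m (Suc k) * ?p k z)"
    unfolding lessThan_Suc_atMost[symmetric] sum.lessThan_Suc_shift by (simp add: mu0)
  also have "\<dots> = (\<Sum>k\<le>M. c (Suc k) * ?m (Suc k) * ?p k z)"
    unfolding lessThan_Suc_atMost[symmetric] sum.lessThan_Suc using c by simp
  finally show ?thesis by (simp add: sum.distrib[symmetric] algebra_simps)
qed

lemma uniq:
  assumes a: "a \<noteq> 0" and q: "q \<noteq> 0"
    and ld: "\<And>k. k < N \<Longrightarrow> lam a b c d q k \<noteq> lam a b c d q N"
    and Z: "\<And>z. z \<in> Z \<Longrightarrow> good q z" and inf: "infinite ((\<lambda>z. z + 1/z) ` Z)"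
    and deg: "degree F1 \<le> N" "degree F2 \<le> N" "coeff F1 N = coeff F2 N"
    and e1: "\<And>z. z \<in> Z \<Longrightarrow> Lop (Awt a b c d q) q (\<lambda>z. poly F1 (z + 1/z)) z = lam a b c d q N * poly F1 (z + 1/z)"
    and e2: "\<And>z. z \<in> Z \<Longrightarrow> Lop (Awt a b c d q) q (\<lambda>z. poly F2 (z + 1/z)) z = lam a b c d q N * poly F2 (z + 1/z)"
  shows "F1 = F2"
proof -
  define D where "D = F1 - F2"
  have eD: "Lop (Awt a b c d q) q (\<lambda>z. poly D (z + 1/z)) z = lam a b c d q N * poly D (z + 1/z)" if "z \<in> Z" for z
    unfolding D_def poly_diff Lop_diff e1[OF that] e2[OF that] by (simp add: algebra_simps)
  have dD: "degree D \<le> N" unfolding D_def using deg by (intro degree_diff_le) auto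
  have cD: "coeff D N = 0" unfolding D_def using deg by simp
  show ?thesis
  proof (cases N)
    case 0
    then have "degree D = 0" using dD by simp
    then have "D = 0" using cD 0 by (metis leading_coeff_0_iff)
    then show ?thesis by (simp add: D_def)
  next
    case (Suc M)
    have "degree D \<le> M" using dD cD Suc
      by (intro degree_le) (metis Suc_lessI coeff_eq_0 le_less_trans not_le)
    from expand[OF a q this] obtain cc where c: "\<forall>k>M. cc k = 0" "D = (\<Sum>k\<le>M. smult (cc k) (Phi a q k))" by blast
    define dd where "dd k = cc k * (lam a b c d q k - lam a b c d q N) + cc (Suc k) * mu a b c d q (Suc k)" for k
    define G where "G = (\<Sum>k\<le>M. smult (dd k) (Phi a q k))"
    have "poly G (z + 1/z) = 0" if "z \<in> Z" for z
    proof -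
      have z: "z \<noteq> 0" using Z[OF that] by (simp add: good_def)
      have "(\<Sum>k\<le>M. (cc k * lam a b c d q k + cc (Suc k) * mu a b c d q (Suc k)) * phi a q k z)
          = lam a b c d q N * (\<Sum>k\<le>M. cc k * phi a q k z)"
        using eD[OF that] Lop_basis[OF Z[OF that] q c(1), of a b c d] c(2) z
        by (simp add: poly_sum poly_Phi)
      moreover have "poly G (z + 1/z) = (\<Sum>k\<le>M. (cc k * lam a b c d q k + cc (Suc k) * mu a b c d q (Suc k)) * phi a q k z)
          - lam a b c d q N * (\<Sum>k\<le>M. cc k * phi a q k z)"
        unfolding G_def dd_def using z
        by (simp add: poly_sum poly_Phi sum_distrib_left sum_subtractf[symmetric] algebra_simps)
      ultimately show ?thesis by simp
    qed
    then have "(\<lambda>z. z + 1/z) ` Z \<subseteq> {x. poly G x = 0}" by auto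
    then have "G = 0" using inf poly_roots_finite finite_subset by blast
    then have ddz: "dd k = 0" if "k \<le> M" for k using indep[OF a q] that unfolding G_def by blast
    have "cc k = 0" if "k \<le> Suc M" for k
      using that
    proof (induction k rule: inc_induct)
      case base then show ?case using c(1) by simp
    next
      case (step k)
      then have "k < N" "k \<le> M" using Suc by auto
      then show ?case using ddz[of k] step.IH ld[of k] unfolding dd_def by simp
    qed
    then have "D = 0" unfolding c(2) by simp
    then show ?thesis by (simp add: D_def)
  qed
qed

lemma i1:
  fixes z a b q :: complex
  assumes n: "z \<noteq> 0" "q \<noteq> 0" "(1-z^2)*(1-q*z^2) \<noteq> 0" "(1+z^2)*(1+q*z^2) \<noteq> 0"
  shows "Awt a b (-a) (-b) q z * (q*z + 1/(q*z)) = (z + 1/z) * Awt (a^2) (b^2) (-q) (-(q^2)) (q^2) (z^2) / q"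
proof -
  define P where "P = (1-z^2)*(1-q*z^2)"
  define R where "R = (1+z^2)*(1+q*z^2)"
  have d: "(1-(z^2)^2)*(1-q^2*(z^2)^2) = P*R" unfolding P_def R_def by algebra
  have "(1-a*z)*(1-b*z)*(1-(-a)*z)*(1-(-b)*z) * (q*z*q*z + 1) * (z*q*(P*R)) 
     = (z*z + 1) * ((1-a^2*z^2)*(1-b^2*z^2)*(1-(-q)*z^2)*(1-(-(q^2))*z^2)) * (P*(q*z))"
    unfolding P_def R_def by algebra
  moreover have "P \<noteq> 0" "R \<noteq> 0" using n by (auto simp: P_def R_def)
  ultimately show ?thesis unfolding Awt_def d P_def[symmetric] using n by (simp add: field_simps)
qed

lemma i3:
  fixes z y a b q :: complex
  assumes zy: "z*y = 1" and n: "q \<noteq> 0" "(1-z^2)*(1-q*z^2) \<noteq> 0" "(1+z^2)*(1+q*z^2) \<noteq> 0"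
     "(1-y^2)*(1-q*y^2) \<noteq> 0" "(1+y^2)*(1+q*y^2) \<noteq> 0"
  shows "Awt a b (-a) (-b) q z + Awt a b (-a) (-b) q y
    = (Awt (a^2) (b^2) (-q) (-(q^2)) (q^2) (z^2) + Awt (a^2) (b^2) (-q) (-(q^2)) (q^2) (y^2)) / q
     - (1-q)*(1-a^2*b^2)/q"
proof -
  define P1 where "P1 = (1-z^2)*(1-q*z^2)"
  define R1 where "R1 = (1+z^2)*(1+q*z^2)"
  define P2 where "P2 = (1-y^2)*(1-q*y^2)"
  define R2 where "R2 = (1+y^2)*(1+q*y^2)"
  define N1 where "N1 = (1-a*z)*(1-b*z)*(1-(-a)*z)*(1-(-b)*z)"
  define N2 where "N2 = (1-a*y)*(1-b*y)*(1-(-a)*y)*(1-(-b)*y)"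
  define M1 where "M1 = (1-a^2*z^2)*(1-b^2*z^2)*(1-(-q)*z^2)*(1-(-(q^2))*z^2)"
  define M2 where "M2 = (1-a^2*y^2)*(1-b^2*y^2)*(1-(-q)*y^2)*(1-(-(q^2))*y^2)"
  have d: "(1-(z^2)^2)*(1-q^2*(z^2)^2) = P1*R1" "(1-(y^2)^2)*(1-q^2*(y^2)^2) = P2*R2"
    unfolding P1_def R1_def P2_def R2_def by algebra+
  have key: "q*(N1*(R1*P2*R2) + N2*(P1*R1*R2)) = M1*(P2*R2) + M2*(P1*R1) - (1-q)*(1-a^2*b^2)*(P1*R1*P2*R2)"
    unfolding P1_def R1_def P2_def R2_def N1_def N2_def M1_def M2_def using zy by algebra
  have nz: "P1 \<noteq> 0" "R1 \<noteq> 0" "P2 \<noteq> 0" "R2 \<noteq> 0" using n by (auto simp: P1_def R1_def P2_def R2_def)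
  have "N1/P1 + N2/P2 = (M1/(P1*R1) + M2/(P2*R2))/q - (1-q)*(1-a^2*b^2)/q"
    using key nz n apply (simp add: field_simps) using key by algebra
  then show ?thesis unfolding Awt_def d N1_def N2_def M1_def M2_def P1_def P2_def .
qed

lemma op_odd:
  fixes z a b q :: complex
  assumes n: "z \<noteq> 0" "q \<noteq> 0" "(1-z^2)*(1-q*z^2) \<noteq> 0" "(1+z^2)*(1+q*z^2) \<noteq> 0"
     "(1-(1/z)^2)*(1-q*(1/z)^2) \<noteq> 0" "(1+(1/z)^2)*(1+q*(1/z)^2) \<noteq> 0"
  shows "Lop (Awt a b (-a) (-b) q) q (\<lambda>z. (z + 1/z) * h (z^2)) z
    = (z + 1/z) * (Lop (Awt (a^2) (b^2) (-q) (-(q^2)) (q^2)) (q^2) h (z^2) / q + (1-q)*(1-a^2*b^2)/q * h (z^2))"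
proof -
  let ?A = "Awt a b (-a) (-b) q" and ?B = "Awt (a^2) (b^2) (-q) (-(q^2)) (q^2)"
  have y: "1/z \<noteq> 0" using n by simp
  have j1: "?A z * (q*z + 1/(q*z)) = (z + 1/z) * ?B (z^2) / q" by (rule i1[OF n(1-4)])
  have j2: "?A (1/z) * (q*(1/z) + 1/(q*(1/z))) = (1/z + 1/(1/z)) * ?B ((1/z)^2) / q" by (rule i1[OF y n(2) n(5) n(6)])
  have zy: "z * (1/z) = 1" using n by simp
  have j3: "?A z + ?A (1/z) = (?B (z^2) + ?B ((1/z)^2)) / q - (1-q)*(1-a^2*b^2)/q"
    by (rule i3[OF zy n(2-6)])
  have e1: "(q*z)^2 = q^2*z^2" "(z/q)^2 = z^2/q^2" "(1/z)^2 = 1/z^2" "1/(z^2) = 1/z^2"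
    by (simp_all add: power_mult_distrib power_divide)
  have e2: "q*(1/z) + 1/(q*(1/z)) = z/q + 1/(z/q)" "1/z + 1/(1/z) = z + 1/z" using n by (simp_all add: field_simps)
  define A1 where "A1 = ?A z"
  define A2 where "A2 = ?A (1/z)"
  define B1 where "B1 = ?B (z^2)"
  define B2 where "B2 = ?B (1/z^2)"
  define X where "X = z + 1/z"
  have J1: "A1 * (q*z + 1/(q*z)) = X * B1 / q" unfolding A1_def X_def B1_def by (rule j1)
  have J2: "A2 * (z/q + 1/(z/q)) = X * B2 / q" using j2 unfolding e2 e1(3) A2_def X_def B2_def .
  have J3: "A1 + A2 = (B1 + B2)/q - (1-q)*(1-a^2*b^2)/q" using j3 unfolding e1(3) A1_def A2_def B1_def B2_def .
  define C1 where "C1 = q*z + 1/(q*z)"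
  define C2 where "C2 = z/q + 1/(z/q)"
  define K where "K = (1-q)*(1-a^2*b^2)/q"
  define H0 where "H0 = h (z^2)"
  define H1 where "H1 = h (q^2*z^2)"
  define H2 where "H2 = h (z^2/q^2)"
  have "(q*z) + 1/(q*z) = C1" "z/q + 1/(z/q) = C2" by (simp_all add: C1_def C2_def)
  have "Lop ?A q (\<lambda>z. (z + 1/z) * h (z^2)) z
      = A1 * C1 * H1 + A2 * C2 * H2 - (A1 + A2) * X * H0"
    unfolding Lop_def A1_def A2_def X_def e1 C1_def C2_def H0_def H1_def H2_def by (simp add: algebra_simps)
  also have "\<dots> = X * ((B1 * (H1 - H0) + B2 * (H2 - H0)) / q + K * H0)"
    using J1 J2 J3 unfolding C1_def[symmetric] C2_def[symmetric] K_def[symmetric]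
    apply (simp only:)
    using n(2) by (simp add: field_simps)
  also have "\<dots> = (z + 1/z) * (Lop ?B (q^2) h (z^2) / q + (1-q)*(1-a^2*b^2)/q * h (z^2))"
    unfolding Lop_def X_def B1_def B2_def K_def H0_def H1_def H2_def by (simp add: mult.commute)
  finally show ?thesis .
qed


lemma Awt_even:
  fixes z a b q :: complex
  assumes "1 + z^2 \<noteq> 0" "1 + q*z^2 \<noteq> 0"
  shows "Awt a b (-a) (-b) q z = Awt (a^2) (b^2) (-1) (-q) (q^2) (z^2)"
proof -
  have num: "(1-a^2*z^2)*(1-b^2*z^2)*(1-(-1)*z^2)*(1-(-q)*z^2) = ((1-a*z)*(1-b*z)*(1-(-a)*z)*(1-(-b)*z)) * ((1+z^2)*(1+q*z^2))"
    by algebra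
  have den: "(1-(z^2)^2)*(1-q^2*(z^2)^2) = ((1-z^2)*(1-q*z^2)) * ((1+z^2)*(1+q*z^2))" by algebra
  have "(1+z^2)*(1+q*z^2) \<noteq> 0" using assms by simp
  then show ?thesis unfolding Awt_def num den by (rule mult_divide_mult_cancel_right[symmetric])
qed

lemma op_even:
  fixes z a b q :: complex
  assumes "1 + z^2 \<noteq> 0" "1 + q*z^2 \<noteq> 0" "1 + (1/z)^2 \<noteq> 0" "1 + q*(1/z)^2 \<noteq> 0"
  shows "Lop (Awt a b (-a) (-b) q) q (\<lambda>z. g (z^2)) z = Lop (Awt (a^2) (b^2) (-1) (-q) (q^2)) (q^2) g (z^2)"
proof -
  have e1: "(q*z)^2 = q^2*z^2" "(z/q)^2 = z^2/q^2" "(1/z)^2 = 1/z^2"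
    by (simp_all add: power_mult_distrib power_divide)
  show ?thesis unfolding Lop_def Awt_even[OF assms(1,2)] Awt_even[OF assms(3,4)] e1 ..
qed



lemma onep: "(x::complex) \<noteq> -1 \<Longrightarrow> 1 + x \<noteq> 0"
  by (simp add: add_eq_0_iff)

lemma qpoch_nz: "(\<And>j. j < n \<Longrightarrow> 1 - x*q^j \<noteq> 0) \<Longrightarrow> qpoch x q n \<noteq> 0"
  unfolding qpoch_def by (simp add: prod_zero_iff)

lemma qpoch_powi_nz:
  assumes q: "(q::complex) \<noteq> 0" and h: "\<And>j. j < n \<Longrightarrow> S*q^(n-1+j) \<noteq> 1"
  shows "qpoch (S * q powi (int n - 1)) q n \<noteq> 0"
proof (rule qpoch_nz)
  fix j assume j: "j < n"
  then obtain m where m: "n = Suc m" by (cases n) auto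
  have "q^n/q*q^j = q^(n-1+j)" using q unfolding m by (simp add: power_add)
  then have eq: "S * q powi (int n - 1) * q^j = S*q^(n-1+j)" unfolding powi2[OF q]
    by (metis mult.assoc)
  show "1 - S * q powi (int n - 1) * q^j \<noteq> 0" unfolding eq using h[OF j] by simp
qed

lemma lam_ne:
  assumes q: "(Q::complex) \<noteq> 0" and ne: "Q^N \<noteq> Q^k" and s: "a*b*c*d*Q^(N+k-1) \<noteq> 1" and N: "1 \<le> N"
  shows "lam a b c d Q k \<noteq> lam a b c d Q N"
proof -
  obtain M where M: "N = Suc M" using N by (cases N) auto
  have e: "Q^(N+k-1) = Q^N*Q^k/Q" using q unfolding M by (simp add: power_add)
  have "lam a b c d Q N - lam a b c d Q k = (1/Q^N - 1/Q^k)*(1 - a*b*c*d*Q^(N+k-1))"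
    unfolding lam_def e using q by (simp add: field_simps)
  moreover have "1/Q^N - 1/Q^k \<noteq> 0" using ne q by (simp add: field_simps)
  moreover have "1 - a*b*c*d*Q^(N+k-1) \<noteq> 0" using s by simp
  ultimately show ?thesis by (metis mult_eq_0_iff right_minus_eq)
qed

lemma comp_facts:
  fixes P :: "complex poly"
  assumes "degree P \<le> n" "coeff P n = 1"
  shows "degree (pcompose P [:-2,0,1:]) \<le> 2*n" "coeff (pcompose P [:-2,0,1:]) (2*n) = 1"
    "degree ([:0,1:] * pcompose P [:-2,0,1:]) \<le> 2*n+1" "coeff ([:0,1:] * pcompose P [:-2,0,1:]) (2*n+1) = 1"
proof -
  have dP: "degree P = n" using assms le_degree[of P n] by simp
  have d: "degree (pcompose P [:-2,0,1:]) = 2*n" unfolding degree_pcompose dP by simp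
  have l: "lead_coeff (pcompose P [:-2,0,1:]) = 1"
    using lead_coeff_comp[of "[:-2,0,1:]" P] dP assms(2) by simp
  show "degree (pcompose P [:-2,0,1:]) \<le> 2*n" using d by simp
  show "coeff (pcompose P [:-2,0,1:]) (2*n) = 1" using d l by simp
  have nz: "pcompose P [:-2,0,1:] \<noteq> 0" using l by auto
  have d2: "degree ([:0,1:] * pcompose P [:-2,0,1:]) = 2*n+1"
    using nz d by (subst degree_mult_eq) auto
  have l2: "lead_coeff ([:0,1:] * pcompose P [:-2,0,1:]) = 1"
    unfolding lead_coeff_mult l by simp
  show "degree ([:0,1:] * pcompose P [:-2,0,1:]) \<le> 2*n+1" using d2 by simp
  show "coeff ([:0,1:] * pcompose P [:-2,0,1:]) (2*n+1) = 1" using d2 l2 by simp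
qed

lemma poly_comp2: "(w::complex) \<noteq> 0 \<Longrightarrow> poly (pcompose (P::complex poly) [:-2,0,1:]) (w + 1/w) = poly P (w^2 + 1/w^2)"
  by (simp add: poly_pcompose field_simps power2_eq_square)

lemma infinite_x:
  fixes q :: real assumes "0 < q" "q < 1"
  shows "infinite ((\<lambda>z. z + 1/z) ` (complex_of_real ` {sqrt q<..<1}))"
proof -
  have sq: "0 < sqrt q" "sqrt q < 1" using assms by auto
  have im: "(\<lambda>z. z + 1/z) ` (complex_of_real ` {sqrt q<..<1}) = (\<lambda>t. complex_of_real (t + 1/t)) ` {sqrt q<..<1}"
    by (auto simp: image_image)
  have inj: "inj_on (\<lambda>t. complex_of_real (t + 1/t)) {sqrt q<..<1}"
  proof (rule inj_onI)
    fix s t assume s: "s \<in> {sqrt q<..<1}" and t: "t \<in> {sqrt q<..<1}"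
      and e: "complex_of_real (s + 1/s) = complex_of_real (t + 1/t)"
    have st: "sqrt q < s" "s < 1" "sqrt q < t" "t < 1" using s t by auto
    have sp: "0 < s" "s < 1" "0 < t" "t < 1" using st sq(1) by linarith+
    have e': "s + 1/s = t + 1/t" using e of_real_eq_iff by blast
    then have "(s - t)*(s*t - 1) = 0" using sp by (simp add: field_simps)
    moreover have "s*t < 1" using sp by (metis less_trans mult_strict_mono' mult_1_right order.strict_implies_order)
    ultimately show "s = t" by simp
  qed
  have "infinite {sqrt q<..<1}" using sq by simp
  then show ?thesis unfolding im using inj finite_imageD by blast
qed



theorem mainTheorem5:
  fixes q :: real and a b :: complex
  assumes "0 < q" and "q < 1"
    and "a \<noteq> 0" and "b \<noteq> 0"
    and generic: "\<And>j::nat. a^2 * b^2 * of_real q ^ j \<noteq> 1"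
      "\<And>j::nat. a * b * of_real q ^ j \<noteq> 1"
      "\<And>j::nat. a * b * of_real q ^ j \<noteq> -1"
      "\<And>j::nat. a^2 * of_real q ^ j \<noteq> -1"
  shows "\<forall>n::nat. \<forall>z::complex. z \<noteq> 0 \<longrightarrow>
      AW (2*n) z a b (-a) (-b) (of_real q)
        = AW n (z^2) (a^2) (b^2) (-1) (- of_real q) (of_real q ^ 2)
    \<and> AW (2*n+1) z a b (-a) (-b) (of_real q)
        = (z + inverse z) * AW n (z^2) (a^2) (b^2) (- of_real q) (- (of_real q ^ 2)) (of_real q ^ 2)"
proof (intro allI impI)
  fix n :: nat and z :: complex
  assume z: "z \<noteq> 0"
  define Q where "Q = complex_of_real q"
  have Q: "Q \<noteq> 0" using assms(1) by (simp add: Q_def)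
  have a: "a \<noteq> 0" by fact
  have a2: "a^2 \<noteq> 0" using a by simp
  have Q2: "Q^2 \<noteq> 0" using Q by simp
  have g1: "\<And>j. a^2*b^2*Q^j \<noteq> 1" using generic(1) by (simp add: Q_def)
  have g2: "\<And>j. a*b*Q^j \<noteq> 1" using generic(2) by (simp add: Q_def)
  have g3: "\<And>j. a*b*Q^j \<noteq> -1" using generic(3) by (simp add: Q_def)
  have g4: "\<And>j. a^2*Q^j \<noteq> -1" using generic(4) by (simp add: Q_def)
  have qj: "q^j < 1" if "0 < j" for j :: nat using assms(1,2) that by (simp add: power_less_one_iff)
  have Qj: "Q^j \<noteq> 1" if "0 < j" for j :: nat
  proof -
    have "Q^j = complex_of_real (q^j)" by (simp add: Q_def)
    then show ?thesis using qj[OF that] by (metis of_real_1 of_real_eq_iff order.irrefl)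
  qed
  have QNk: "Q^N \<noteq> Q^k" if "k < N" for k N :: nat
  proof -
    have "q^N < q^k" using assms(1,2) that by (simp add: power_strict_decreasing)
    then show ?thesis unfolding Q_def by (metis of_real_eq_iff of_real_power order.irrefl)
  qed
  have Qs: "Q*Q^k = Q^(Suc k)" "Q^2*(Q^2)^k = Q^(Suc (Suc (2*k)))" "(Q^2)^k = Q^(2*k)" "Q*(Q^2)^k = Q^(Suc (2*k))"
     "Q^2*(Q^2)^k = Q^(Suc (Suc (2*k)))" for k
    by (simp_all add: power_mult power2_eq_square)
  have nzL: "1 - a*b*Q^k \<noteq> 0 \<and> 1 - a*(-a)*Q^k \<noteq> 0 \<and> 1 - a*(-b)*Q^k \<noteq> 0 \<and> 1 - Q*Q^k \<noteq> 0" for k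
  proof (intro conjI)
    show "1 - a*b*Q^k \<noteq> 0" using g2[of k] by simp
    show "1 - a*(-a)*Q^k \<noteq> 0" using onep[OF g4[of k]] by (simp add: power2_eq_square)
    show "1 - a*(-b)*Q^k \<noteq> 0" using onep[OF g3[of k]] by simp
    show "1 - Q*Q^k \<noteq> 0" using Qj[of "Suc k"] unfolding Qs by simp
  qed
  have nzE: "1 - a^2*b^2*(Q^2)^k \<noteq> 0 \<and> 1 - a^2*(-1)*(Q^2)^k \<noteq> 0 \<and> 1 - a^2*(-Q)*(Q^2)^k \<noteq> 0 \<and> 1 - Q^2*(Q^2)^k \<noteq> 0" for k
  proof (intro conjI)
    show "1 - a^2*b^2*(Q^2)^k \<noteq> 0" using g1[of "2*k"] unfolding Qs by simp
    show "1 - a^2*(-1)*(Q^2)^k \<noteq> 0" using onep[OF g4[of "2*k"]] unfolding Qs by simp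
    have "a^2*(-Q)*(Q^2)^k = -(a^2*(Q*(Q^2)^k))" by simp
    then show "1 - a^2*(-Q)*(Q^2)^k \<noteq> 0" using onep[OF g4[of "Suc (2*k)"]] unfolding Qs by (simp add: mult.assoc)
    have "Q^2*(Q^2)^k = Q^(Suc (Suc (2*k)))" by (rule Qs(2))
    then show "1 - Q^2*(Q^2)^k \<noteq> 0" using Qj[of "Suc (Suc (2*k))"] by simp
  qed
  have nzO: "1 - a^2*b^2*(Q^2)^k \<noteq> 0 \<and> 1 - a^2*(-Q)*(Q^2)^k \<noteq> 0 \<and> 1 - a^2*(-(Q^2))*(Q^2)^k \<noteq> 0 \<and> 1 - Q^2*(Q^2)^k \<noteq> 0" for k
  proof -
    have "a^2*(-(Q^2))*(Q^2)^k = -(a^2*(Q^2*(Q^2)^k))" by simp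
    moreover have "Q^2*(Q^2)^k = Q^(Suc (Suc (2*k)))" by (rule Qs(2))
    ultimately have "1 - a^2*(-(Q^2))*(Q^2)^k \<noteq> 0" using onep[OF g4[of "Suc (Suc (2*k))"]] by (simp add: mult.assoc)
    then show ?thesis using nzE[of k] by simp
  qed
  define Z where "Z = complex_of_real ` {sqrt q<..<1}"
  have infZ: "infinite ((\<lambda>z. z + 1/z) ` Z)" unfolding Z_def by (rule infinite_x[OF assms(1,2)])
  have Zf: "good Q w \<and> good (Q^2) (w^2) \<and> (1-w^2)*(1-Q*w^2) \<noteq> 0 \<and> (1+w^2)*(1+Q*w^2) \<noteq> 0
      \<and> (1-(1/w)^2)*(1-Q*(1/w)^2) \<noteq> 0 \<and> (1+(1/w)^2)*(1+Q*(1/w)^2) \<noteq> 0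
      \<and> 1 + w^2 \<noteq> 0 \<and> 1 + Q*w^2 \<noteq> 0 \<and> 1 + (1/w)^2 \<noteq> 0 \<and> 1 + Q*(1/w)^2 \<noteq> 0 \<and> w \<noteq> 0" if wZ: "w \<in> Z" for w
  proof -
    obtain t where t: "w = complex_of_real t" "sqrt q < t" "t < 1" using wZ unfolding Z_def by auto
    have sq: "0 < sqrt q" using assms(1) by simp
    have t0: "0 < t" using t sq by linarith
    have tq: "q < t^2" using t(2) assms(1) sq
      by (metis real_less_rsqrt real_sqrt_less_iff real_sqrt_pow2 less_imp_le power_strict_mono zero_less_numeral)
    have t1: "t^2 < 1" using t0 t(3) by (simp add: power_less_one_iff)
    have qt: "q*t^2 < 1" using t1 assms by (metis less_trans mult_strict_mono' mult_1_left less_imp_le zero_le_power2)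
    have r1: "1 - t^2 > 0" "1 - q*t^2 > 0" "1 + t^2 > 0" "1 + q*t^2 > 0" "1 - 1/t^2 < 0" "1 - q/t^2 > 0"
      "1 + 1/t^2 > 0" "1 + q/t^2 > 0" "1 - (t^2)^2 > 0" "1 - q^2*(t^2)^2 > 0"
    proof -
      show "1 - t^2 > 0" "1 - q*t^2 > 0" using t1 qt by auto
      show "1 + t^2 > 0" "1 + q*t^2 > 0" using assms(1) by (auto intro: add_pos_nonneg)
      show "1 - 1/t^2 < 0" using t1 t0 by (simp add: field_simps)
      show "1 - q/t^2 > 0" using tq t0 by (simp add: field_simps)
      show "1 + 1/t^2 > 0" "1 + q/t^2 > 0" using t0 assms(1) by (auto intro: add_pos_nonneg)
      have "(t^2)^2 < 1" using t1 t0 by (simp add: power_less_one_iff)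
      then show "1 - (t^2)^2 > 0" by simp
      have "q*t^2 \<ge> 0" using assms(1) by simp
      then have "(q*t^2)^2 < 1" using qt by (simp add: power_less_one_iff)
      then show "1 - q^2*(t^2)^2 > 0" by (simp add: power_mult_distrib)
    qed
    have ofr: "\<And>c x. c = complex_of_real x \<Longrightarrow> x \<noteq> 0 \<Longrightarrow> c \<noteq> 0" by simp
    have q0: "0 < q" by fact
    have f1: "w \<noteq> 0" using t0 by (simp add: t)
    have f2: "1 - w^2 \<noteq> 0" by (rule ofr[of _ "1 - t^2"]) (use r1 in \<open>simp_all add: t\<close>)
    have f3: "1 - Q*w^2 \<noteq> 0" by (rule ofr[of _ "1 - q*t^2"]) (use r1 in \<open>simp_all add: t Q_def\<close>)
    have f4: "w^2 - Q \<noteq> 0" by (rule ofr[of _ "t^2 - q"]) (use tq in \<open>simp_all add: t Q_def\<close>)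
    have f5: "w^2 \<noteq> 0" using f1 by simp
    have f6: "1 - (w^2)^2 \<noteq> 0" by (rule ofr[of _ "1 - (t^2)^2"]) (use r1 in \<open>simp_all add: t\<close>)
    have f7: "1 - Q^2*(w^2)^2 \<noteq> 0" by (rule ofr[of _ "1 - q^2*(t^2)^2"]) (use r1 in \<open>simp_all add: t Q_def\<close>)
    have tq2: "q^2 < (t^2)^2" using power_strict_mono[OF tq, of 2] q0 by simp
    have f8: "(w^2)^2 - Q^2 \<noteq> 0" by (rule ofr[of _ "(t^2)^2 - q^2"]) (use tq2 in \<open>simp_all add: t Q_def\<close>)
    have f9: "1 + w^2 \<noteq> 0" by (rule ofr[of _ "1 + t^2"]) (use r1 in \<open>simp_all add: t\<close>)
    have f10: "1 + Q*w^2 \<noteq> 0" by (rule ofr[of _ "1 + q*t^2"]) (use r1 in \<open>simp_all add: t Q_def\<close>)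
    have f11: "1 - (1/w)^2 \<noteq> 0" by (rule ofr[of _ "1 - 1/t^2"]) (use r1 in \<open>simp_all add: t power_divide\<close>)
    have f12: "1 - Q*(1/w)^2 \<noteq> 0" by (rule ofr[of _ "1 - q/t^2"]) (use r1 tq in \<open>simp_all add: t Q_def power_divide\<close>)
    have f13: "1 + (1/w)^2 \<noteq> 0" by (rule ofr[of _ "1 + 1/t^2"]) (use r1 in \<open>simp_all add: t power_divide\<close>)
    have f14: "1 + Q*(1/w)^2 \<noteq> 0" by (rule ofr[of _ "1 + q/t^2"]) (use r1 in \<open>simp_all add: t Q_def power_divide\<close>)
    have g1': "good Q w" unfolding good_def using f1 f2 f3 f4 by simp
    have g2': "good (Q^2) (w^2)" unfolding good_def using f5 f6 f7 f8 by simp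
    show ?thesis using g1' g2' f1 f2 f3 f9 f10 f11 f12 f13 f14 by simp
  qed
  have Zg: "\<And>w. w \<in> Z \<Longrightarrow> good Q w" using Zf by blast
  have Sab: "a*b*(-a)*(-b) = a^2*b^2" by (simp add: power2_eq_square mult_ac)
  define P1 where "P1 = Paw (2*n) a b (-a) (-b) Q"
  define PE where "PE = Paw n (a^2) (b^2) (-1) (-Q) (Q^2)"
  define F2 where "F2 = pcompose PE [:-2,0,1:]"
  have dP1: "degree P1 \<le> 2*n" unfolding P1_def by (rule degree_Paw[OF a Q])
  have cP1: "coeff P1 (2*n) = 1" unfolding P1_def
  proof (rule monic_Paw[OF a Q])
    show "qpoch (a*b) Q (2*n) \<noteq> 0" "qpoch (a*(-a)) Q (2*n) \<noteq> 0" "qpoch (a*(-b)) Q (2*n) \<noteq> 0" "qpoch Q Q (2*n) \<noteq> 0"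
      by (rule qpoch_nz, use nzL in blast)+
    show "qpoch (a*b*(-a)*(-b) * Q powi (int (2*n) - 1)) Q (2*n) \<noteq> 0"
      by (rule qpoch_powi_nz[OF Q]) (unfold Sab, rule g1)
  qed
  have dPE: "degree PE \<le> n" unfolding PE_def by (rule degree_Paw[OF a2 Q2])
  have cPE: "coeff PE n = 1" unfolding PE_def
  proof (rule monic_Paw[OF a2 Q2])
    show "qpoch (a^2*b^2) (Q^2) n \<noteq> 0" "qpoch (a^2*(-1)) (Q^2) n \<noteq> 0" "qpoch (a^2*(-Q)) (Q^2) n \<noteq> 0"
      "qpoch (Q^2) (Q^2) n \<noteq> 0"
      by (rule qpoch_nz, use nzE in blast)+
    have e: "a^2*b^2*(-1)*(-Q)*(Q^2)^m = a^2*b^2*Q^(Suc (2*m))" for m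
      by (simp add: power_mult power2_eq_square power_mult_distrib mult_ac)
    show "qpoch (a^2*b^2*(-1)*(-Q) * (Q^2) powi (int n - 1)) (Q^2) n \<noteq> 0"
      by (rule qpoch_powi_nz[OF Q2]) (unfold e, rule g1)
  qed
  note cf2 = comp_facts[OF dPE cPE]
  have ldE: "lam a b (-a) (-b) Q k \<noteq> lam a b (-a) (-b) Q (2*n)" if "k < 2*n" for k
    by (rule lam_ne[OF Q QNk[OF that]]) (unfold Sab, rule g1, use that in simp)
  have lamE: "lam (a^2) (b^2) (-1) (-Q) (Q^2) n = lam a b (-a) (-b) Q (2*n)"
  proof -
    define M where "M = Q^(2*n)"
    have M: "(Q^2)^n = M" "M \<noteq> 0" using Q by (simp_all add: M_def power_mult)
    show ?thesis unfolding lam_def M(1) M_def[symmetric] using M(2) Q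
      by (simp add: field_simps power2_eq_square)
  qed
  have e1E: "Lop (Awt a b (-a) (-b) Q) Q (\<lambda>z. poly P1 (z + 1/z)) w = lam a b (-a) (-b) Q (2*n) * poly P1 (w + 1/w)"
    if wZ: "w \<in> Z" for w
  proof -
    have w: "w \<noteq> 0" using Zf[OF wZ] by blast
    have "Lop (Awt a b (-a) (-b) Q) Q (\<lambda>z. poly P1 (z + 1/z)) w = Lop (Awt a b (-a) (-b) Q) Q (\<lambda>z. AW (2*n) z a b (-a) (-b) Q) w"
      by (rule Lop_cong[OF w Q]) (simp add: P1_def poly_Paw)
    also have "\<dots> = lam a b (-a) (-b) Q (2*n) * AW (2*n) w a b (-a) (-b) Q"
      by (rule G2[OF Zg[OF wZ] Q]) (use nzL in blast)
    finally show ?thesis using w by (simp add: P1_def poly_Paw)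
  qed
  have e2E: "Lop (Awt a b (-a) (-b) Q) Q (\<lambda>z. poly F2 (z + 1/z)) w = lam a b (-a) (-b) Q (2*n) * poly F2 (w + 1/w)"
    if wZ: "w \<in> Z" for w
  proof -
    have w: "w \<noteq> 0" and w2: "w^2 \<noteq> 0" using Zf[OF wZ] by auto
    have pF: "poly F2 (u + 1/u) = AW n (u^2) (a^2) (b^2) (-1) (-Q) (Q^2)" if "u \<noteq> 0" for u
      using that unfolding F2_def by (simp add: poly_comp2 PE_def poly_Paw)
    have "Lop (Awt a b (-a) (-b) Q) Q (\<lambda>z. poly F2 (z + 1/z)) w
        = Lop (Awt a b (-a) (-b) Q) Q (\<lambda>z. (\<lambda>v. AW n v (a^2) (b^2) (-1) (-Q) (Q^2)) (z^2)) w"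
      by (rule Lop_cong[OF w Q]) (simp add: pF)
    also have "\<dots> = Lop (Awt (a^2) (b^2) (-1) (-Q) (Q^2)) (Q^2) (\<lambda>v. AW n v (a^2) (b^2) (-1) (-Q) (Q^2)) (w^2)"
      by (rule op_even) (use Zf[OF wZ] in blast)+
    also have "\<dots> = lam (a^2) (b^2) (-1) (-Q) (Q^2) n * AW n (w^2) (a^2) (b^2) (-1) (-Q) (Q^2)"
      by (rule G2) (use Zf[OF wZ] Q2 nzE in blast)+
    finally show ?thesis unfolding lamE pF[OF w] .
  qed
  have eqE: "P1 = F2"
    by (rule uniq[OF a Q ldE Zg infZ dP1 cf2(1)[folded F2_def]]) (use cP1 cf2(2)[folded F2_def] e1E e2E in auto)
  define P3 where "P3 = Paw (2*n+1) a b (-a) (-b) Q"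
  define PO where "PO = Paw n (a^2) (b^2) (-Q) (-(Q^2)) (Q^2)"
  define F3 where "F3 = [:0,1:] * pcompose PO [:-2,0,1:]"
  have dP3: "degree P3 \<le> 2*n+1" unfolding P3_def by (rule degree_Paw[OF a Q])
  have cP3: "coeff P3 (2*n+1) = 1" unfolding P3_def
  proof (rule monic_Paw[OF a Q])
    show "qpoch (a*b) Q (2*n+1) \<noteq> 0" "qpoch (a*(-a)) Q (2*n+1) \<noteq> 0" "qpoch (a*(-b)) Q (2*n+1) \<noteq> 0"
      "qpoch Q Q (2*n+1) \<noteq> 0"
      by (rule qpoch_nz, use nzL in blast)+
    show "qpoch (a*b*(-a)*(-b) * Q powi (int (2*n+1) - 1)) Q (2*n+1) \<noteq> 0"
      by (rule qpoch_powi_nz[OF Q]) (unfold Sab, rule g1)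
  qed
  have dPO: "degree PO \<le> n" unfolding PO_def by (rule degree_Paw[OF a2 Q2])
  have cPO: "coeff PO n = 1" unfolding PO_def
  proof (rule monic_Paw[OF a2 Q2])
    show "qpoch (a^2*b^2) (Q^2) n \<noteq> 0" "qpoch (a^2*(-Q)) (Q^2) n \<noteq> 0" "qpoch (a^2*(-(Q^2))) (Q^2) n \<noteq> 0"
      "qpoch (Q^2) (Q^2) n \<noteq> 0"
      by (rule qpoch_nz, use nzO in blast)+
    have e: "a^2*b^2*(-Q)*(-(Q^2))*(Q^2)^m = a^2*b^2*Q^(Suc (Suc (Suc (2*m))))" for m
      by (simp add: power_mult power2_eq_square power_mult_distrib mult_ac)
    show "qpoch (a^2*b^2*(-Q)*(-(Q^2)) * (Q^2) powi (int n - 1)) (Q^2) n \<noteq> 0"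
      by (rule qpoch_powi_nz[OF Q2]) (unfold e, rule g1)
  qed
  note cf3 = comp_facts[OF dPO cPO]
  have ldO: "lam a b (-a) (-b) Q k \<noteq> lam a b (-a) (-b) Q (2*n+1)" if "k < 2*n+1" for k
    by (rule lam_ne[OF Q QNk[OF that]]) (unfold Sab, rule g1, use that in simp)
  have lamO: "lam a b (-a) (-b) Q (2*n+1) = lam (a^2) (b^2) (-Q) (-(Q^2)) (Q^2) n / Q + (1-Q)*(1-a^2*b^2)/Q"
  proof -
    define M where "M = Q^(2*n)"
    have M: "(Q^2)^n = M" "Q^(2*n+1) = Q*M" "M \<noteq> 0" using Q by (simp_all add: M_def power_mult)
    show ?thesis unfolding lam_def M(1,2) using M(3) Q
      by (simp add: field_simps power2_eq_square)
  qed
  have e1O: "Lop (Awt a b (-a) (-b) Q) Q (\<lambda>z. poly P3 (z + 1/z)) w = lam a b (-a) (-b) Q (2*n+1) * poly P3 (w + 1/w)"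
    if wZ: "w \<in> Z" for w
  proof -
    have w: "w \<noteq> 0" using Zf[OF wZ] by blast
    have "Lop (Awt a b (-a) (-b) Q) Q (\<lambda>z. poly P3 (z + 1/z)) w = Lop (Awt a b (-a) (-b) Q) Q (\<lambda>z. AW (2*n+1) z a b (-a) (-b) Q) w"
      by (rule Lop_cong[OF w Q]) (simp add: P3_def poly_Paw)
    also have "\<dots> = lam a b (-a) (-b) Q (2*n+1) * AW (2*n+1) w a b (-a) (-b) Q"
      by (rule G2[OF Zg[OF wZ] Q]) (use nzL in blast)
    finally show ?thesis using w by (simp add: P3_def poly_Paw)
  qed
  have e2O: "Lop (Awt a b (-a) (-b) Q) Q (\<lambda>z. poly F3 (z + 1/z)) w = lam a b (-a) (-b) Q (2*n+1) * poly F3 (w + 1/w)"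
    if wZ: "w \<in> Z" for w
  proof -
    have w: "w \<noteq> 0" and w2: "w^2 \<noteq> 0" using Zf[OF wZ] by auto
    define h where "h v = AW n v (a^2) (b^2) (-Q) (-(Q^2)) (Q^2)" for v
    have pF: "poly F3 (u + 1/u) = (u + 1/u) * h (u^2)" if "u \<noteq> 0" for u
      using that unfolding F3_def h_def by (simp add: poly_comp2 PO_def poly_Paw)
    have "Lop (Awt a b (-a) (-b) Q) Q (\<lambda>z. poly F3 (z + 1/z)) w
        = Lop (Awt a b (-a) (-b) Q) Q (\<lambda>z. (z + 1/z) * h (z^2)) w"
      by (rule Lop_cong[OF w Q]) (simp add: pF)
    also have "\<dots> = (w + 1/w) * (Lop (Awt (a^2) (b^2) (-Q) (-(Q^2)) (Q^2)) (Q^2) h (w^2) / Q + (1-Q)*(1-a^2*b^2)/Q * h (w^2))"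
      by (rule op_odd) (use Zf[OF wZ] Q in blast)+
    also have "Lop (Awt (a^2) (b^2) (-Q) (-(Q^2)) (Q^2)) (Q^2) h (w^2) = lam (a^2) (b^2) (-Q) (-(Q^2)) (Q^2) n * h (w^2)"
      unfolding h_def by (rule G2) (use Zf[OF wZ] Q2 nzO in blast)+
    finally show ?thesis unfolding lamO pF[OF w] by (simp add: algebra_simps add_divide_distrib)
  qed
  have eqO: "P3 = F3"
    by (rule uniq[OF a Q ldO Zg infZ dP3 cf3(3)[folded F3_def]]) (use cP3 cf3(4)[folded F3_def] e1O e2O in auto)
  have "AW (2*n) z a b (-a) (-b) Q = AW n (z^2) (a^2) (b^2) (-1) (-Q) (Q^2)"
  proof -
    have "AW (2*n) z a b (-a) (-b) Q = poly P1 (z + 1/z)" using z by (simp add: P1_def poly_Paw)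
    also have "\<dots> = poly PE (z^2 + 1/z^2)" unfolding eqE F2_def using z by (rule poly_comp2)
    also have "\<dots> = AW n (z^2) (a^2) (b^2) (-1) (-Q) (Q^2)" using z by (simp add: PE_def poly_Paw)
    finally show ?thesis .
  qed
  moreover have "AW (2*n+1) z a b (-a) (-b) Q = (z + 1/z) * AW n (z^2) (a^2) (b^2) (-Q) (-(Q^2)) (Q^2)"
  proof -
    have "AW (2*n+1) z a b (-a) (-b) Q = poly P3 (z + 1/z)" using z by (simp add: P3_def poly_Paw)
    also have "\<dots> = (z + 1/z) * poly PO (z^2 + 1/z^2)" unfolding eqO F3_def using z by (simp add: poly_comp2)
    also have "\<dots> = (z + 1/z) * AW n (z^2) (a^2) (b^2) (-Q) (-(Q^2)) (Q^2)" using z by (simp add: PO_def poly_Paw)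
    finally show ?thesis .
  qed
  ultimately show "AW (2*n) z a b (-a) (-b) (of_real q)
        = AW n (z^2) (a^2) (b^2) (-1) (- of_real q) (of_real q ^ 2)
    \<and> AW (2*n+1) z a b (-a) (-b) (of_real q)
        = (z + inverse z) * AW n (z^2) (a^2) (b^2) (- of_real q) (- (of_real q ^ 2)) (of_real q ^ 2)"
    unfolding Q_def inverse_eq_divide by simp
qed


end
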